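(* Let $a>0$, $\mu\in(0,1]$, $0<\lambda<1$ and let $\gamma$ be a local stable leaf. Then the $\theta_a$-diameter of $\mathcal D(\lambda a,\mu,\gamma)$ inside $\mathcal D(a,\mu,\gamma)$, i.e. $\sup\{\theta_a(\rho',\rho''):\rho',\rho''\in\mathcal D(\lambda a,\mu,\gamma)\}$, is at most $D(a):=4a+\log(\tau_2/\tau_1)<\infty$, where $\tau_1:=\inf\{\frac{z-z^{\lambda}}{z-z^{-\lambda}}:z>1\}$ and $\tau_2:=\sup\{\frac{z-z^{-\lambda}}{z-z^{\lambda}}:z>1\}$. In particular, if $\omega$, $a'>0$ and $a$ satisfy $\lambda:=(a'+\bar G(\omega))\lambda_s^\mu/a<1$, then for every leaf $\gamma$ and preimage leaf $\gamma_j$, $$\sup\{\theta_a(\mathscr L_j^\omega\rho',\mathscr L_j^\omega\rho''):\ \rho',\rho''\in\mathcal D(a',\mu,\gamma)\}\le D(a),$$ a bound independent of $\gamma$ and $\gamma_j$.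
   Context: Local stable leaves $\gamma$ of a uniformly hyperbolic set $\Lambda$ of a $C^2$ diffeomorphism $f$ of a compact Riemannian manifold (distance $d\le 1$ on the relevant open set $Q$), with induced Riemannian measures $m_\gamma$. $\mathcal D(a,\mu,\gamma):=\{\rho:\gamma\to\mathbb R:\ \rho>0,\ \rho(x)\le\rho(y)e^{a d(x,y)^\mu}\ \forall x,y\in\gamma\}$, and $\theta_a$ is its Hilbert projective metric: with $v\preceq w$ iff $w-v\in\mathcal D(a,\mu,\gamma)\cup\{0\}$, $\theta_a(v_1,v_2)=\log(\beta/\alpha)$ where $\alpha=\sup\{t>0:tv_1\preceq v_2\}$, $\beta=\inf\{s>0:v_2\preceq sv_1\}$. Constants: $0<\lambda_s<1$ with $d(fx,fy)\le\lambda_s d(x,y)$ on leaves; preimage leaves $\gamma_1,\dots,\gamma_n$ of $\gamma$ satisfy $\gamma\cap f(Q)=\bigcup_jf(\gamma_j)$; $\mathscr L_j^\omega\rho:=\frac{|\det D(f|_{\gamma_j})|}{|\det Df|}(\rho\circ f)(g(Y_1(\omega),\cdot)\circ f)$ on $\gamma_j$, with $g$ a nonnegative likelihood and $G(\omega)$ a log-Lipschitz constant of $g(Y_1(\omega),\cdot)$ on $Q$; $\bar G(\omega):=G(\omega)+(K_1+K_2)/\lambda_s^\mu$ with $K_1,K_2$ Lipschitz constants of $\log|\det Df|$ and $\log|\det D(f|_{\gamma_j})|$. *)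

theory Defs
  imports "HOL-Analysis.Analysis"
begin

text \<open>Functions on a leaf are modelled as total functions; only their values on
  the leaf (a set of points of a metric space) matter.\<close>

definition holder_cone :: "real \<Rightarrow> real \<Rightarrow> 'a::metric_space set \<Rightarrow> ('a \<Rightarrow> real) set" where
  "holder_cone a \<mu> \<gamma> = {\<rho>. (\<forall>x\<in>\<gamma>. 0 < \<rho> x) \<and>
      (\<forall>x\<in>\<gamma>. \<forall>y\<in>\<gamma>. \<rho> x \<le> \<rho> y * exp (a * dist x y powr \<mu>))}"

definition cone_le :: "real \<Rightarrow> real \<Rightarrow> 'a::metric_space set \<Rightarrow> ('a \<Rightarrow> real) \<Rightarrow> ('a \<Rightarrow> real) \<Rightarrow> bool" where
  "cone_le a \<mu> \<gamma> v w \<longleftrightarrow> (\<lambda>x. w x - v x) \<in> holder_cone a \<mu> \<gamma> \<or> (\<forall>x\<in>\<gamma>. w x - v x = 0)"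

definition theta_alpha_set where
  "theta_alpha_set a \<mu> \<gamma> v1 v2 = {t::real. 0 < t \<and> cone_le a \<mu> \<gamma> (\<lambda>x. t * v1 x) v2}"

definition theta_beta_set where
  "theta_beta_set a \<mu> \<gamma> v1 v2 = {s::real. 0 < s \<and> cone_le a \<mu> \<gamma> v2 (\<lambda>x. s * v1 x)}"

text \<open>Hilbert projective metric \<theta>_a = log(\<beta>/\<alpha>), valued in the extended reals:
  it is \<infinity> when \<alpha> = 0 (no t) or \<beta> = \<infinity> (no s).\<close>
definition hilbert_theta :: "real \<Rightarrow> real \<Rightarrow> 'a::metric_space set \<Rightarrow> ('a \<Rightarrow> real) \<Rightarrow> ('a \<Rightarrow> real) \<Rightarrow> ereal" where
  "hilbert_theta a \<mu> \<gamma> v1 v2 =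
     (if theta_alpha_set a \<mu> \<gamma> v1 v2 \<noteq> {} \<and> bdd_above (theta_alpha_set a \<mu> \<gamma> v1 v2)
         \<and> theta_beta_set a \<mu> \<gamma> v1 v2 \<noteq> {}
      then ereal (ln (Inf (theta_beta_set a \<mu> \<gamma> v1 v2) / Sup (theta_alpha_set a \<mu> \<gamma> v1 v2)))
      else \<infinity>)"

definition tau1_set :: "real \<Rightarrow> real set" where
  "tau1_set lam = {(z - z powr lam) / (z - z powr (-lam)) | z. z > 1}"

definition tau2_set :: "real \<Rightarrow> real set" where
  "tau2_set lam = {(z - z powr (-lam)) / (z - z powr lam) | z. z > 1}"

definition tau1 :: "real \<Rightarrow> real" where "tau1 lam = Inf (tau1_set lam)"
definition tau2 :: "real \<Rightarrow> real" where "tau2 lam = Sup (tau2_set lam)"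

definition Dbound :: "real \<Rightarrow> real \<Rightarrow> real" where
  "Dbound a lam = 4 * a + ln (tau2 lam / tau1 lam)"

text \<open>Transfer operator on a preimage leaf: (L\<rho>)(x) = Jl x / Jf x * \<rho>(f x) * g(f x),
  where Jl = |det D(f|\<gamma>_j)|, Jf = |det Df|, g = g(Y_1(\<omega>),\<cdot>).\<close>
definition transfer_op :: "('a \<Rightarrow> real) \<Rightarrow> ('a \<Rightarrow> real) \<Rightarrow> ('a \<Rightarrow> 'a) \<Rightarrow> ('a \<Rightarrow> real) \<Rightarrow> ('a \<Rightarrow> real) \<Rightarrow> 'a \<Rightarrow> real" where
  "transfer_op Jl Jf f g \<rho> x = Jl x / Jf x * \<rho> (f x) * g (f x)"

end

theory Submission imports Defs begin

lemma tau_lower: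
  fixes l z :: real
  assumes l: "0 < l" "l < 1" and z: "1 < z"
  shows "(1 - l) / (1 + l) \<le> (z - z powr l) / (z - z powr (-l))"
    and "0 < z - z powr l" and "0 < z - z powr (-l)"
proof -
  define u where "u = ln z"
  have u: "0 < u" using z by (simp add: u_def)
  have zu: "z = exp u" using z by (simp add: u_def)
  have zl: "z powr l = exp (l*u)" and zml: "z powr (-l) = exp (-l*u)"
    using z by (simp_all add: powr_def u_def)
  define t where "t = (1 - l) / (1 + l)"
  have t: "0 \<le> t" "t \<le> 1" using l by (auto simp: t_def)
  have cv: "exp ((1 - t) *\<^sub>R 0 + t *\<^sub>R (-(1+l)*u)) \<le> (1 - t) * exp 0 + t * exp (-(1+l)*u)"
    by (rule convex_onD[OF exp_convex t]) auto
  have "t * (1+l) = 1 - l" using l by (simp add: t_def)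
  moreover have "t *\<^sub>R (-(1+l)*u) = -(t*(1+l))*u" by (simp add: algebra_simps)
  ultimately have eq: "t *\<^sub>R (-(1+l)*u) = -(1-l)*u" by simp
  have e: "exp (-(1-l)*u) \<le> (1 - t) + t * exp (-(1+l)*u)"
    using cv by (simp only: eq scaleR_zero_right add_0_left exp_zero mult_1_right)
  have p1: "exp (-(1-l)*u) < 1" using l u by (simp add: mult_neg_pos mult_pos_pos)
  have p2: "exp (-(1+l)*u) < 1" using l u by (simp add: mult_neg_pos mult_pos_pos)
  have a1: "z * exp (-(1-l)*u) = z powr l" unfolding zl
    by (subst zu) (simp add: algebra_simps flip: exp_add)
  have a2: "z * exp (-(1+l)*u) = z powr (-l)" unfolding zml
    by (subst zu) (simp add: algebra_simps flip: exp_add)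
  have num: "z - z powr l = z * (1 - exp (-(1-l)*u))"
    using a1 by (simp add: algebra_simps)
  have den: "z - z powr (-l) = z * (1 - exp (-(1+l)*u))"
    using a2 by (simp add: algebra_simps)
  show "0 < z - z powr l" using num p1 z by simp
  show "0 < z - z powr (-l)" using den p2 z by simp
  have "t * (1 - exp (-(1+l)*u)) \<le> 1 - exp (-(1-l)*u)" using e by (simp add: algebra_simps)
  hence "t \<le> (1 - exp (-(1-l)*u)) / (1 - exp (-(1+l)*u))"
    using p2 by (simp add: pos_le_divide_eq)
  also have "\<dots> = (z - z powr l) / (z - z powr (-l))"
    using z by (simp add: num den)
  finally show "(1 - l) / (1 + l) \<le> (z - z powr l) / (z - z powr (-l))" by (simp add: t_def)
qed

lemma tau_facts:
  fixes l :: real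
  assumes l: "0 < l" "l < 1"
  shows "0 < tau1 l" "tau1 l < 1" "bdd_above (tau2_set l)" "1 < tau2 l"
    "\<And>z. 1 < z \<Longrightarrow> tau1 l \<le> (z - z powr l) / (z - z powr (-l))"
    "\<And>z. 1 < z \<Longrightarrow> (z - z powr (-l)) / (z - z powr l) \<le> tau2 l"
proof -
  have c: "0 < (1 - l) / (1 + l)" using l by simp
  have bb: "bdd_below (tau1_set l)" unfolding tau1_set_def bdd_below_def
  proof (rule exI[of _ 0], safe)
    fix z :: real assume "1 < z"
    from tau_lower(2,3)[OF l this] show "0 \<le> (z - z powr l) / (z - z powr (-l))" by simp
  qed
  have ne: "tau1_set l \<noteq> {}" unfolding tau1_set_def by (auto intro!: exI[of _ 2])
  show lo: "\<And>z. 1 < z \<Longrightarrow> tau1 l \<le> (z - z powr l) / (z - z powr (-l))"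
    unfolding tau1_def by (rule cInf_lower[OF _ bb]) (auto simp: tau1_set_def)
  have ge: "(1 - l) / (1 + l) \<le> tau1 l" unfolding tau1_def
    by (rule cInf_greatest[OF ne]) (auto simp: tau1_set_def intro: tau_lower[OF l])
  thus "0 < tau1 l" using c by linarith
  have less: "z powr (-l) < z powr l" if "1 < z" for z :: real
    using powr_less_mono[of "-l" l z] l that by simp
  have "(2 - 2 powr l) / (2 - 2 powr (-l)) < 1"
    using less[of 2] tau_lower(2,3)[OF l, of 2] by simp
  thus "tau1 l < 1" using lo[of 2] by simp
  have up: "(z - z powr (-l)) / (z - z powr l) \<le> (1 + l) / (1 - l)" if "1 < z" for z
  proof -
    have p: "0 < z - z powr l" "0 < z - z powr (-l)" using tau_lower(2,3)[OF l that] by auto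
    have "(1 - l) / (1 + l) \<le> (z - z powr l) / (z - z powr (-l))" using tau_lower(1)[OF l that] .
    hence "(1 - l) * (z - z powr (-l)) \<le> (z - z powr l) * (1 + l)"
      using p l by (simp add: divide_simps)
    thus ?thesis using p l by (simp add: divide_simps mult.commute)
  qed
  show bA: "bdd_above (tau2_set l)" unfolding tau2_set_def bdd_above_def
    using up by blast
  show hi: "\<And>z. 1 < z \<Longrightarrow> (z - z powr (-l)) / (z - z powr l) \<le> tau2 l"
    unfolding tau2_def by (rule cSup_upper[OF _ bA]) (auto simp: tau2_set_def)
  have "1 < (2 - 2 powr (-l)) / (2 - 2 powr l)"
    using less[of 2] tau_lower(2,3)[OF l, of 2] by simp
  thus "1 < tau2 l" using hi[of 2] by simp
qed

lemma key_pt: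
  fixes p1x p1y p2x p2y u l t s :: real
  assumes l: "0 < l" "l < 1" and u: "0 \<le> u"
    and pos: "0 < p1x" "0 < p1y" "0 < p2x" "0 < p2y"
    and h1: "p1x \<le> p1y * exp (l*u)" "p1y \<le> p1x * exp (l*u)"
    and h2: "p2x \<le> p2y * exp (l*u)" "p2y \<le> p2x * exp (l*u)"
    and t: "0 \<le> t" "0 < u \<Longrightarrow> t \<le> p2y / p1y * ((exp u - exp u powr l) / (exp u - exp u powr (-l)))"
    and s: "0 \<le> s" "0 < u \<Longrightarrow> p2y / p1y * ((exp u - exp u powr (-l)) / (exp u - exp u powr l)) \<le> s"
  shows "p2x - t * p1x \<le> (p2y - t * p1y) * exp u"
    and "s * p1x - p2x \<le> (s * p1y - p2y) * exp u"
proof -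
  have "p2x - t * p1x \<le> (p2y - t * p1y) * exp u \<and> s * p1x - p2x \<le> (s * p1y - p2y) * exp u"
  proof (cases "u = 0")
    case True
    hence "p1x = p1y" "p2x = p2y" using h1 h2 by auto
    thus ?thesis using True by simp
  next
    case False
    hence u0: "0 < u" using u by simp
    define z where "z = exp u"
    have z: "1 < z" using u0 by (simp add: z_def)
    have zl: "z powr l = exp (l*u)" and zml: "z powr (-l) = exp (-(l*u))"
      by (simp_all add: z_def powr_def)
    have pa: "0 < z - z powr l" "0 < z - z powr (-l)" using tau_lower(2,3)[OF l z] by auto
    have lo1: "p1y * z powr (-l) \<le> p1x"
    proof -
      have "p1y * exp (-(l*u)) \<le> p1x * exp (l*u) * exp (-(l*u))"
        using h1(2) by (simp add: mult_right_mono)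
      thus ?thesis by (simp add: zml mult.assoc flip: exp_add)
    qed
    have lo2: "p2y * z powr (-l) \<le> p2x"
    proof -
      have "p2y * exp (-(l*u)) \<le> p2x * exp (l*u) * exp (-(l*u))"
        using h2(2) by (simp add: mult_right_mono)
      thus ?thesis by (simp add: zml mult.assoc flip: exp_add)
    qed
    have up1: "p1x \<le> p1y * z powr l" using h1(1) zl by simp
    have up2: "p2x \<le> p2y * z powr l" using h2(1) zl by simp
    have A: "t * (p1y * (z - z powr (-l))) \<le> p2y * (z - z powr l)"
    proof -
      have "t \<le> p2y / p1y * ((z - z powr l) / (z - z powr (-l)))" using t(2)[OF u0] by (simp add: z_def)
      hence "t * (p1y * (z - z powr (-l))) \<le> p2y / p1y * ((z - z powr l) / (z - z powr (-l))) * (p1y * (z - z powr (-l)))"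
        using pa pos by (intro mult_right_mono) auto
      also have "\<dots> = p2y * (z - z powr l)" using pa pos by (simp add: field_simps)
      finally show ?thesis .
    qed
    have B: "p2y * (z - z powr (-l)) \<le> s * (p1y * (z - z powr l))"
    proof -
      have "p2y / p1y * ((z - z powr (-l)) / (z - z powr l)) \<le> s" using s(2)[OF u0] by (simp add: z_def)
      hence "p2y / p1y * ((z - z powr (-l)) / (z - z powr l)) * (p1y * (z - z powr l)) \<le> s * (p1y * (z - z powr l))"
        using pa pos by (intro mult_right_mono) auto
      also have "p2y / p1y * ((z - z powr (-l)) / (z - z powr l)) * (p1y * (z - z powr l)) = p2y * (z - z powr (-l))"
        using pa pos by (simp add: field_simps)
      finally show ?thesis .
    qed
    have "t * (z * p1y - p1x) \<le> t * (p1y * (z - z powr (-l)))"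
      using lo1 t(1) by (intro mult_left_mono) (auto simp: algebra_simps)
    hence r1: "p2x - t * p1x \<le> (p2y - t * p1y) * z" using A up2 by (simp add: algebra_simps)
    have "s * (p1y * (z - z powr l)) \<le> s * (z * p1y - p1x)"
      using up1 s(1) by (intro mult_left_mono) (auto simp: algebra_simps)
    hence r2: "s * p1x - p2x \<le> (s * p1y - p2y) * z" using B lo2 by (simp add: algebra_simps)
    show ?thesis using r1 r2 by (simp add: z_def)
  qed
  thus "p2x - t * p1x \<le> (p2y - t * p1y) * exp u" "s * p1x - p2x \<le> (s * p1y - p2y) * exp u" by auto
qed

lemma diam_bound:
  fixes \<Gamma> :: "'a::metric_space set" and a \<mu> l :: real
  assumes a: "0 < a" and mu: "0 < \<mu>" and l: "0 < l" "l < 1"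
    and d1: "\<forall>x\<in>\<Gamma>. \<forall>y\<in>\<Gamma>. dist x y \<le> 1" and ne: "\<Gamma> \<noteq> {}"
    and r1: "\<rho>1 \<in> holder_cone (l * a) \<mu> \<Gamma>" and r2: "\<rho>2 \<in> holder_cone (l * a) \<mu> \<Gamma>"
  shows "hilbert_theta a \<mu> \<Gamma> \<rho>1 \<rho>2 \<le> ereal (Dbound a l)"
proof -
  note tf = tau_facts[OF l]
  obtain y0 where y0: "y0 \<in> \<Gamma>" using ne by blast
  have p1: "\<forall>x\<in>\<Gamma>. 0 < \<rho>1 x" and h1: "\<forall>x\<in>\<Gamma>. \<forall>y\<in>\<Gamma>. \<rho>1 x \<le> \<rho>1 y * exp (l * (a * dist x y powr \<mu>))"
    using r1 by (auto simp: holder_cone_def mult.assoc)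
  have p2: "\<forall>x\<in>\<Gamma>. 0 < \<rho>2 x" and h2: "\<forall>x\<in>\<Gamma>. \<forall>y\<in>\<Gamma>. \<rho>2 x \<le> \<rho>2 y * exp (l * (a * dist x y powr \<mu>))"
    using r2 by (auto simp: holder_cone_def mult.assoc)
  define r0 where "r0 = \<rho>2 y0 / \<rho>1 y0"
  define c where "c = exp (l * a)"
  have r0: "0 < r0" using p1 p2 y0 by (simp add: r0_def)
  have c: "1 < c" using l a by (simp add: c_def)
  have dpow: "dist x y powr \<mu> \<le> 1" if "x \<in> \<Gamma>" "y \<in> \<Gamma>" for x y
    using d1 that mu by (intro powr_le1) auto
  have Ele: "exp (l * (a * dist x y powr \<mu>)) \<le> c" if "x \<in> \<Gamma>" "y \<in> \<Gamma>" for x y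
    using dpow[OF that] l a by (simp add: c_def mult_left_le)
  have ratio: "r0 / (c*c) \<le> \<rho>2 x / \<rho>1 x \<and> \<rho>2 x / \<rho>1 x \<le> r0 * (c * c)" if x: "x \<in> \<Gamma>" for x
  proof -
    have "\<rho>2 x \<le> \<rho>2 y0 * c" using h2 x y0 Ele[OF x y0] p2
      by (meson less_imp_le mult_left_mono order_trans)
    moreover have "\<rho>1 y0 \<le> \<rho>1 x * c" using h1 x y0 Ele[OF y0 x] p1
      by (meson less_imp_le mult_left_mono order_trans)
    moreover have "\<rho>1 x \<le> \<rho>1 y0 * c" using h1 x y0 Ele[OF x y0] p1
      by (meson less_imp_le mult_left_mono order_trans)
    moreover have "\<rho>2 y0 \<le> \<rho>2 x * c" using h2 x y0 Ele[OF y0 x] p2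
      by (meson less_imp_le mult_left_mono order_trans)
    ultimately have m1: "\<rho>1 x * \<rho>2 y0 \<le> (c * \<rho>1 y0) * (c * \<rho>2 x)"
      and m2: "\<rho>1 y0 * \<rho>2 x \<le> (c * \<rho>1 x) * (c * \<rho>2 y0)"
      using p1 p2 x y0 c by (auto intro!: mult_mono simp: mult.commute)
    show ?thesis using p1 p2 x y0 c m1 m2 unfolding r0_def
      by (auto simp: field_simps)
  qed
  define t1 where "t1 = tau1 l * (r0 / (c*c))"
  define s1 where "s1 = tau2 l * (r0 * (c*c))"
  have t1: "0 < t1" using tf r0 c by (simp add: t1_def)
  have s1: "0 < s1" using tf r0 c by (simp add: s1_def)
  have hold: "\<rho>2 x - t1 * \<rho>1 x \<le> (\<rho>2 y - t1 * \<rho>1 y) * exp (a * dist x y powr \<mu>) \<and>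
      s1 * \<rho>1 x - \<rho>2 x \<le> (s1 * \<rho>1 y - \<rho>2 y) * exp (a * dist x y powr \<mu>)"
    if x: "x \<in> \<Gamma>" and y: "y \<in> \<Gamma>" for x y
  proof -
    define u where "u = a * dist x y powr \<mu>"
    have u: "0 \<le> u" using a by (simp add: u_def)
    have rxy: "r0 / (c*c) \<le> \<rho>2 y / \<rho>1 y" "\<rho>2 y / \<rho>1 y \<le> r0 * (c*c)" using ratio[OF y] by auto
    have ry: "0 < \<rho>2 y / \<rho>1 y" using p1 p2 y by simp
    have tt: "t1 \<le> \<rho>2 y / \<rho>1 y * ((exp u - exp u powr l) / (exp u - exp u powr (-l)))" if "0 < u"
    proof -
      have "tau1 l \<le> (exp u - exp u powr l) / (exp u - exp u powr (-l))" using tf(5) that by simp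
      thus ?thesis unfolding t1_def using rxy(1) tf(1) r0 c
        by (subst mult.commute) (intro mult_mono, auto)
    qed
    have ss: "\<rho>2 y / \<rho>1 y * ((exp u - exp u powr (-l)) / (exp u - exp u powr l)) \<le> s1" if "0 < u"
    proof -
      have e: "(exp u - exp u powr (-l)) / (exp u - exp u powr l) \<le> tau2 l" using tf(6) that by simp
      have "0 \<le> (exp u - exp u powr (-l)) / (exp u - exp u powr l)"
        using tau_lower(2,3)[OF l, of "exp u"] that by simp
      thus ?thesis unfolding s1_def using rxy(2) e ry
        by (subst mult.commute) (intro mult_mono, auto)
    qed
    have "\<rho>2 x - t1 * \<rho>1 x \<le> (\<rho>2 y - t1 * \<rho>1 y) * exp u \<and> s1 * \<rho>1 x - \<rho>2 x \<le> (s1 * \<rho>1 y - \<rho>2 y) * exp u"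
    proof -
      have hx1: "\<rho>1 x \<le> \<rho>1 y * exp (l*u)" using h1 x y by (simp add: u_def)
      have hy1: "\<rho>1 y \<le> \<rho>1 x * exp (l*u)" using h1[rule_format, OF y x] dist_commute[of y x] by (simp add: u_def)
      have hx2: "\<rho>2 x \<le> \<rho>2 y * exp (l*u)" using h2 x y by (simp add: u_def)
      have hy2: "\<rho>2 y \<le> \<rho>2 x * exp (l*u)" using h2[rule_format, OF y x] dist_commute[of y x] by (simp add: u_def)
      show ?thesis
        using key_pt[OF l u _ _ _ _ hx1 hy1 hx2 hy2 _ tt _ ss] p1 p2 x y t1 s1 by auto
    qed
    thus ?thesis by (simp add: u_def)
  qed
  define A where "A = theta_alpha_set a \<mu> \<Gamma> \<rho>1 \<rho>2"
  define B where "B = theta_beta_set a \<mu> \<Gamma> \<rho>1 \<rho>2"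
  have t1A: "t1 \<in> A"
  proof -
    have "t1 * \<rho>1 x < \<rho>2 x" if x: "x \<in> \<Gamma>" for x
    proof -
      have "0 < r0 / (c*c)" using r0 c by simp
      hence "t1 < r0 / (c*c)" using tf(2) unfolding t1_def
        using mult_strict_right_mono[of "tau1 l" 1 "r0 / (c*c)"] by simp
      also have "\<dots> \<le> \<rho>2 x / \<rho>1 x" using ratio[OF x] by simp
      finally show ?thesis using p1 x by (simp add: pos_less_divide_eq)
    qed
    thus ?thesis using t1 hold unfolding A_def theta_alpha_set_def cone_le_def holder_cone_def by auto
  qed
  have s1B: "s1 \<in> B"
  proof -
    have "\<rho>2 x < s1 * \<rho>1 x" if x: "x \<in> \<Gamma>" for x
    proof -
      have "\<rho>2 x / \<rho>1 x \<le> r0 * (c*c)" using ratio[OF x] by simp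
      also have "\<dots> < s1" using tf(4) r0 c by (simp add: s1_def)
      finally show ?thesis using p1 x by (simp add: pos_divide_less_eq)
    qed
    thus ?thesis using s1 hold unfolding B_def theta_beta_set_def cone_le_def holder_cone_def by auto
  qed
  have Aub: "t \<le> r0" if "t \<in> A" for t
  proof -
    have "\<rho>2 y0 - t * \<rho>1 y0 \<ge> 0" using that y0 unfolding A_def theta_alpha_set_def cone_le_def holder_cone_def
      by (auto intro: less_imp_le)
    thus ?thesis using p1 y0 by (simp add: r0_def pos_le_divide_eq)
  qed
  have Blb: "r0 \<le> s" if "s \<in> B" for s
  proof -
    have "s * \<rho>1 y0 - \<rho>2 y0 \<ge> 0" using that y0 unfolding B_def theta_beta_set_def cone_le_def holder_cone_def
      by (auto intro: less_imp_le)
    thus ?thesis using p1 y0 by (simp add: r0_def pos_divide_le_eq)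
  qed
  have bA: "bdd_above A" using Aub by (auto simp: bdd_above_def)
  have bB: "bdd_below B" using Blb by (auto simp: bdd_below_def)
  have supA: "t1 \<le> Sup A" by (rule cSup_upper[OF t1A bA])
  have infB: "Inf B \<le> s1" by (rule cInf_lower[OF s1B bB])
  have infB0: "r0 \<le> Inf B" using s1B Blb by (intro cInf_greatest) auto
  have eq: "hilbert_theta a \<mu> \<Gamma> \<rho>1 \<rho>2 = ereal (ln (Inf B / Sup A))"
    using t1A s1B bA unfolding hilbert_theta_def A_def B_def by auto
  have "ln (Inf B / Sup A) \<le> ln (s1 / t1)"
    using supA infB infB0 r0 t1 s1 by (intro ln_mono divide_pos_pos frac_le) auto
  also have "s1 / t1 = tau2 l / tau1 l * exp (4 * (l * a))"
    using tf r0 c by (simp add: s1_def t1_def c_def field_simps flip: exp_add)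
  also have "ln \<dots> = ln (tau2 l / tau1 l) + 4 * (l * a)"
    using tf by (subst ln_mult) auto
  also have "\<dots> \<le> Dbound a l" using l a by (simp add: Dbound_def)
  finally show ?thesis using eq by simp
qed

lemma le_powr_small:
  fixes x \<mu> :: real
  assumes "0 \<le> x" "x \<le> 1" "0 < \<mu>" "\<mu> \<le> 1"
  shows "x \<le> x powr \<mu>"
proof (cases "x = 0")
  case True thus ?thesis by simp
next
  case False
  hence "x powr 1 \<le> x powr \<mu>" using assms by (intro powr_mono') auto
  thus ?thesis using False assms by simp
qed

lemma transfer_cone:
  fixes Q \<gamma> \<gamma>j :: "'a::metric_space set"
    and f :: "'a \<Rightarrow> 'a" and Jf Jl g \<rho> :: "'a \<Rightarrow> real"
    and a' \<mu> lam_s G K1 K2 :: real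
  assumes mu: "0 < \<mu>" "\<mu> \<le> 1"
    and Q_diam: "\<forall>x\<in>Q. \<forall>y\<in>Q. dist x y \<le> 1"
    and lams: "0 < lam_s" "lam_s < 1"
    and leaves: "\<gamma> \<subseteq> Q" "\<gamma>j \<subseteq> Q"
    and f_maps: "f ` \<gamma>j \<subseteq> \<gamma>"
    and f_contr: "\<forall>x\<in>\<gamma>j. \<forall>y\<in>\<gamma>j. dist (f x) (f y) \<le> lam_s * dist x y"
    and Jf_pos: "\<forall>x\<in>Q. 0 < Jf x"
    and Jf_lip: "\<forall>x\<in>Q. \<forall>y\<in>Q. \<bar>ln (Jf x) - ln (Jf y)\<bar> \<le> K1 * dist x y"
    and Jl_pos: "\<forall>x\<in>\<gamma>j. 0 < Jl x"
    and Jl_lip: "\<forall>x\<in>\<gamma>j. \<forall>y\<in>\<gamma>j. \<bar>ln (Jl x) - ln (Jl y)\<bar> \<le> K2 * dist x y"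
    and g_pos: "\<forall>x\<in>Q. 0 < g x"
    and g_lip: "\<forall>x\<in>Q. \<forall>y\<in>Q. \<bar>ln (g x) - ln (g y)\<bar> \<le> G * dist x y"
    and consts_nonneg: "0 \<le> G" "0 \<le> K1" "0 \<le> K2"
    and a'_pos: "0 < a'"
    and rho: "\<rho> \<in> holder_cone a' \<mu> \<gamma>"
  shows "transfer_op Jl Jf f g \<rho> \<in> holder_cone (a' * lam_s powr \<mu> + G * lam_s powr \<mu> + K1 + K2) \<mu> \<gamma>j"
proof -
  define L where "L = transfer_op Jl Jf f g \<rho>"
  define k where "k = a' * lam_s powr \<mu> + G * lam_s powr \<mu> + K1 + K2"
  have rpos: "\<forall>x\<in>\<gamma>. 0 < \<rho> x" and rh: "\<forall>x\<in>\<gamma>. \<forall>y\<in>\<gamma>. \<rho> x \<le> \<rho> y * exp (a' * dist x y powr \<mu>)"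
    using rho by (auto simp: holder_cone_def)
  have fQ: "f x \<in> Q" "f x \<in> \<gamma>" if "x \<in> \<gamma>j" for x using that f_maps leaves by auto
  have xQ: "x \<in> Q" if "x \<in> \<gamma>j" for x using that leaves by auto
  have Lpos: "0 < L x" if x: "x \<in> \<gamma>j" for x
    using Jl_pos Jf_pos g_pos rpos fQ[OF x] xQ[OF x] x by (simp add: L_def transfer_op_def)
  have lnL: "ln (L x) = ln (Jl x) - ln (Jf x) + ln (\<rho> (f x)) + ln (g (f x))" if x: "x \<in> \<gamma>j" for x
  proof -
    have "0 < Jl x" "0 < Jf x" "0 < g (f x)" "0 < \<rho> (f x)"
      using Jl_pos Jf_pos g_pos rpos fQ[OF x] xQ[OF x] x by auto
    thus ?thesis by (simp add: L_def transfer_op_def ln_mult ln_div)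
  qed
  have main: "ln (L x) - ln (L y) \<le> k * dist x y powr \<mu>" if x: "x \<in> \<gamma>j" and y: "y \<in> \<gamma>j" for x y
  proof -
    define d where "d = dist x y"
    define dF where "dF = dist (f x) (f y)"
    have d: "0 \<le> d" "d \<le> 1" using Q_diam xQ[OF x] xQ[OF y] by (auto simp: d_def)
    have dF: "0 \<le> dF" "dF \<le> lam_s * d" using f_contr x y by (auto simp: dF_def d_def)
    have ld: "0 \<le> lam_s * d" "lam_s * d \<le> 1" using d lams by (auto intro: mult_le_one)
    have dmu: "d \<le> d powr \<mu>" using le_powr_small[OF d mu] .
    have e1: "ln (Jl x) - ln (Jl y) \<le> K2 * d powr \<mu>"
    proof -
      have "ln (Jl x) - ln (Jl y) \<le> K2 * d" using Jl_lip x y by (force simp: d_def)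
      also have "\<dots> \<le> K2 * d powr \<mu>" using dmu consts_nonneg by (simp add: mult_left_mono)
      finally show ?thesis .
    qed
    have e2: "ln (Jf y) - ln (Jf x) \<le> K1 * d powr \<mu>"
    proof -
      have "ln (Jf y) - ln (Jf x) \<le> K1 * d" using Jf_lip xQ[OF x] xQ[OF y] dist_commute[of y x] by (force simp: d_def)
      also have "\<dots> \<le> K1 * d powr \<mu>" using dmu consts_nonneg by (simp add: mult_left_mono)
      finally show ?thesis .
    qed
    have dFmu: "dF powr \<mu> \<le> lam_s powr \<mu> * d powr \<mu>"
    proof -
      have "dF powr \<mu> \<le> (lam_s * d) powr \<mu>" using dF mu by (intro powr_mono2) auto
      thus ?thesis using lams d by (simp add: powr_mult)
    qed
    have e3: "ln (\<rho> (f x)) - ln (\<rho> (f y)) \<le> a' * lam_s powr \<mu> * d powr \<mu>"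
    proof -
      have "\<rho> (f x) \<le> \<rho> (f y) * exp (a' * dF powr \<mu>)" using rh fQ[OF x] fQ[OF y] by (simp add: dF_def)
      hence "ln (\<rho> (f x)) \<le> ln (\<rho> (f y) * exp (a' * dF powr \<mu>))"
        using rpos fQ[OF x] by (subst ln_le_cancel_iff) auto
      also have "\<dots> = ln (\<rho> (f y)) + a' * dF powr \<mu>" using rpos fQ[OF y] by (subst ln_mult) auto
      finally have "ln (\<rho> (f x)) - ln (\<rho> (f y)) \<le> a' * dF powr \<mu>" by simp
      also have "\<dots> \<le> a' * (lam_s powr \<mu> * d powr \<mu>)" using dFmu a'_pos by (simp add: mult_left_mono)
      finally show ?thesis by (simp add: mult.assoc)
    qed
    have e4: "ln (g (f x)) - ln (g (f y)) \<le> G * lam_s powr \<mu> * d powr \<mu>"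
    proof -
      have "ln (g (f x)) - ln (g (f y)) \<le> G * dF" using g_lip fQ[OF x] fQ[OF y] by (force simp: dF_def)
      also have "\<dots> \<le> G * (lam_s * d)" using dF consts_nonneg by (simp add: mult_left_mono)
      also have "\<dots> \<le> G * ((lam_s * d) powr \<mu>)"
        using le_powr_small[OF ld mu] consts_nonneg by (simp add: mult_left_mono)
      also have "\<dots> = G * lam_s powr \<mu> * d powr \<mu>" using lams d by (simp add: powr_mult)
      finally show ?thesis .
    qed
    show ?thesis using lnL[OF x] lnL[OF y] e1 e2 e3 e4 unfolding k_def d_def[symmetric]
      by (simp add: algebra_simps)
  qed
  have "L x \<le> L y * exp (k * dist x y powr \<mu>)" if x: "x \<in> \<gamma>j" and y: "y \<in> \<gamma>j" for x y
  proof -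
    have "L x = exp (ln (L x))" using Lpos[OF x] by simp
    also have "\<dots> \<le> exp (ln (L y) + k * dist x y powr \<mu>)" using main[OF x y] by simp
    also have "\<dots> = L y * exp (k * dist x y powr \<mu>)" using Lpos[OF y] by (simp add: exp_add)
    finally show ?thesis .
  qed
  thus ?thesis using Lpos unfolding holder_cone_def L_def k_def by auto
qed

theorem lemma4p6:
  fixes Q \<gamma> \<gamma>j :: "'a::metric_space set"
    and f :: "'a \<Rightarrow> 'a" and Jf Jl g :: "'a \<Rightarrow> real"
    and a a' \<mu> lam_s G K1 K2 :: real
  assumes a_pos: "0 < a" and mu: "0 < \<mu>" "\<mu> \<le> 1"
    and Q_diam: "\<forall>x\<in>Q. \<forall>y\<in>Q. dist x y \<le> 1"
    and lams: "0 < lam_s" "lam_s < 1"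
    and leaves: "\<gamma> \<subseteq> Q" "\<gamma> \<noteq> {}" "\<gamma>j \<subseteq> Q" "\<gamma>j \<noteq> {}"
    and f_maps: "f ` \<gamma>j \<subseteq> \<gamma>"
    and f_contr: "\<forall>x\<in>\<gamma>j. \<forall>y\<in>\<gamma>j. dist (f x) (f y) \<le> lam_s * dist x y"
    and Jf_pos: "\<forall>x\<in>Q. 0 < Jf x"
    and Jf_lip: "\<forall>x\<in>Q. \<forall>y\<in>Q. \<bar>ln (Jf x) - ln (Jf y)\<bar> \<le> K1 * dist x y"
    and Jl_pos: "\<forall>x\<in>\<gamma>j. 0 < Jl x"
    and Jl_lip: "\<forall>x\<in>\<gamma>j. \<forall>y\<in>\<gamma>j. \<bar>ln (Jl x) - ln (Jl y)\<bar> \<le> K2 * dist x y"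
    and g_pos: "\<forall>x\<in>Q. 0 < g x"
    and g_lip: "\<forall>x\<in>Q. \<forall>y\<in>Q. \<bar>ln (g x) - ln (g y)\<bar> \<le> G * dist x y"
    and consts_nonneg: "0 \<le> G" "0 \<le> K1" "0 \<le> K2"
    and a'_pos: "0 < a'"
    and lam_lt: "(a' + (G + (K1 + K2) / lam_s powr \<mu>)) * lam_s powr \<mu> / a < 1"
  shows "(\<forall>lam. \<forall>\<Gamma>. 0 < lam \<and> lam < 1 \<and> \<Gamma> \<subseteq> Q \<and> \<Gamma> \<noteq> {} \<longrightarrow>
            0 < tau1 lam \<and> bdd_above (tau2_set lam) \<and>
            (\<forall>\<rho>1\<in>holder_cone (lam * a) \<mu> \<Gamma>. \<forall>\<rho>2\<in>holder_cone (lam * a) \<mu> \<Gamma>.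
               hilbert_theta a \<mu> \<Gamma> \<rho>1 \<rho>2 \<le> ereal (Dbound a lam)))
       \<and> (\<forall>\<rho>1\<in>holder_cone a' \<mu> \<gamma>. \<forall>\<rho>2\<in>holder_cone a' \<mu> \<gamma>.
            hilbert_theta a \<mu> \<gamma>j (transfer_op Jl Jf f g \<rho>1) (transfer_op Jl Jf f g \<rho>2)
              \<le> ereal (Dbound a ((a' + (G + (K1 + K2) / lam_s powr \<mu>)) * lam_s powr \<mu> / a)))"
proof -
  have P1: "\<forall>lam. \<forall>\<Gamma>. 0 < lam \<and> lam < 1 \<and> \<Gamma> \<subseteq> Q \<and> \<Gamma> \<noteq> {} \<longrightarrow>
            0 < tau1 lam \<and> bdd_above (tau2_set lam) \<and>
            (\<forall>\<rho>1\<in>holder_cone (lam * a) \<mu> \<Gamma>. \<forall>\<rho>2\<in>holder_cone (lam * a) \<mu> \<Gamma>.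
               hilbert_theta a \<mu> \<Gamma> \<rho>1 \<rho>2 \<le> ereal (Dbound a lam))"
  proof (intro allI impI conjI ballI)
    fix lam :: real and \<Gamma> :: "'a set" and \<rho>1 \<rho>2
    assume h: "0 < lam \<and> lam < 1 \<and> \<Gamma> \<subseteq> Q \<and> \<Gamma> \<noteq> {}"
    show "0 < tau1 lam" "bdd_above (tau2_set lam)" using tau_facts[of lam] h by auto
    assume "\<rho>1 \<in> holder_cone (lam * a) \<mu> \<Gamma>" "\<rho>2 \<in> holder_cone (lam * a) \<mu> \<Gamma>"
    thus "hilbert_theta a \<mu> \<Gamma> \<rho>1 \<rho>2 \<le> ereal (Dbound a lam)"
      using h Q_diam a_pos mu by (intro diam_bound) auto
  qed
  define lam' where "lam' = (a' + (G + (K1 + K2) / lam_s powr \<mu>)) * lam_s powr \<mu> / a"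
  have ls: "0 < lam_s powr \<mu>" using lams by simp
  have lam'a: "lam' * a = a' * lam_s powr \<mu> + G * lam_s powr \<mu> + K1 + K2"
    using a_pos ls by (simp add: lam'_def field_simps)
  have lam'0: "0 < lam'" using a_pos ls a'_pos consts_nonneg unfolding lam'_def
    by (intro divide_pos_pos mult_pos_pos add_pos_nonneg) auto
  have lam'1: "lam' < 1" using lam_lt by (simp add: lam'_def)
  have P2: "\<forall>\<rho>1\<in>holder_cone a' \<mu> \<gamma>. \<forall>\<rho>2\<in>holder_cone a' \<mu> \<gamma>.
            hilbert_theta a \<mu> \<gamma>j (transfer_op Jl Jf f g \<rho>1) (transfer_op Jl Jf f g \<rho>2)
              \<le> ereal (Dbound a lam')"
  proof (intro ballI)
    fix \<rho>1 \<rho>2 assume r: "\<rho>1 \<in> holder_cone a' \<mu> \<gamma>" "\<rho>2 \<in> holder_cone a' \<mu> \<gamma>"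
    have c1: "transfer_op Jl Jf f g \<rho>1 \<in> holder_cone (lam' * a) \<mu> \<gamma>j"
      unfolding lam'a
      by (rule transfer_cone[OF mu Q_diam lams leaves(1) leaves(3) f_maps f_contr Jf_pos Jf_lip Jl_pos Jl_lip g_pos g_lip consts_nonneg a'_pos r(1)])
    have c2: "transfer_op Jl Jf f g \<rho>2 \<in> holder_cone (lam' * a) \<mu> \<gamma>j"
      unfolding lam'a
      by (rule transfer_cone[OF mu Q_diam lams leaves(1) leaves(3) f_maps f_contr Jf_pos Jf_lip Jl_pos Jl_lip g_pos g_lip consts_nonneg a'_pos r(2)])
    show "hilbert_theta a \<mu> \<gamma>j (transfer_op Jl Jf f g \<rho>1) (transfer_op Jl Jf f g \<rho>2) \<le> ereal (Dbound a lam')"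
      using Q_diam leaves a_pos mu lam'0 lam'1 c1 c2 by (intro diam_bound) auto
  qed
  show ?thesis using P1 P2 unfolding lam'_def by blast
qed

end
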